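(* Let $\sigma$ be a signature containing $\triangleright$ and let $\mathcal{A}$ be a $\sigma$-algebra. If $\mathcal{A}$ has a meet-complete representation by partial functions, then the atoms of $\mathcal{A}$ are separating: whenever $a \not\le b$ in $\mathcal{A}$ there is an atom $c$ of $\mathcal{A}$ with $c \le a$ and $c \not\le b$. In particular, $\mathcal{A}$ is atomic (every nonzero element lies above some atom).
   Context: Signatures $\sigma$ are sets of operation symbols drawn from: $\triangleright$ (antidomain restriction), $;$ (composition), $\wedge$ (intersection), $\mathrm{upd}$ (update), $\sqcup$ (preferential union), $\mathsf{D}$ (domain), $\mathsf{A}$ (antidomain), interpreted on partial functions as: $f \triangleright g = \{(x,y) \in g : x \notin \mathrm{dom}(f)\}$; $f;g$ = relational composition ($f$ first); $f\wedge g = f\cap g$; $\mathrm{upd}(f,g)(x)$ is $f(x)$ if $f(x)$ defined and $g(x)$ undefined, $g(x)$ if both defined, undefined otherwise; $(f\sqcup g)(x)$ is $f(x)$ if defined, else $g(x)$; $\mathsf{D}(f)$ = identity on $\mathrm{dom}(f)$; $\mathsf{A}(f)$ = identity on the complement of $\mathrm{dom}(f)$ in the base. A representation by partial functions is an isomorphism onto a $\sigma$-algebra of partial functions with these operations. Define $0 := a\triangleright a$, $a\lhd b := (a\triangleright b)\triangleright b$, $a \le b :\iff a\lhd b = a$; for representable algebras this is a partial order with least element $0$ and $a\le b\iff\theta(a)\subseteq\theta(b)$. An atom is a minimal nonzero element. A representation $\theta$ is meet complete if for every nonempty $S$ with $\bigwedge S$ existing in $(\mathcal{A},\le)$, $\theta(\bigwedge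 S)=\bigcap\theta[S]$. *)

theory Defs
  imports Main
begin

datatype opsym = ARestr | Comp | Meet | Upd | Pref | Dom | Antidom

text \<open>An algebra with (interpretations of) all operation symbols; only those in the
  signature sigma are relevant.\<close>
record 'a salg =
  carrier :: "'a set"
  ar :: "'a \<Rightarrow> 'a \<Rightarrow> 'a"
  cmp :: "'a \<Rightarrow> 'a \<Rightarrow> 'a"
  mt :: "'a \<Rightarrow> 'a \<Rightarrow> 'a"
  up :: "'a \<Rightarrow> 'a \<Rightarrow> 'a"
  pu :: "'a \<Rightarrow> 'a \<Rightarrow> 'a"
  dm :: "'a \<Rightarrow> 'a"
  adm :: "'a \<Rightarrow> 'a"

definition sigma_algebra :: "opsym set \<Rightarrow> 'a salg \<Rightarrow> bool" where
  "sigma_algebra \<sigma> A \<longleftrightarrow>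
     (ARestr \<in> \<sigma> \<longrightarrow> (\<forall>a\<in>carrier A. \<forall>b\<in>carrier A. ar A a b \<in> carrier A)) \<and>
     (Comp \<in> \<sigma> \<longrightarrow> (\<forall>a\<in>carrier A. \<forall>b\<in>carrier A. cmp A a b \<in> carrier A)) \<and>
     (Meet \<in> \<sigma> \<longrightarrow> (\<forall>a\<in>carrier A. \<forall>b\<in>carrier A. mt A a b \<in> carrier A)) \<and>
     (Upd \<in> \<sigma> \<longrightarrow> (\<forall>a\<in>carrier A. \<forall>b\<in>carrier A. up A a b \<in> carrier A)) \<and>
     (Pref \<in> \<sigma> \<longrightarrow> (\<forall>a\<in>carrier A. \<forall>b\<in>carrier A. pu A a b \<in> carrier A)) \<and>
     (Dom \<in> \<sigma> \<longrightarrow> (\<forall>a\<in>carrier A. dm A a \<in> carrier A)) \<and>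
     (Antidom \<in> \<sigma> \<longrightarrow> (\<forall>a\<in>carrier A. adm A a \<in> carrier A))"

definition pf_ar :: "('b \<times> 'b) set \<Rightarrow> ('b \<times> 'b) set \<Rightarrow> ('b \<times> 'b) set" where
  "pf_ar f g = {(x, y) \<in> g. x \<notin> Domain f}"

definition pf_upd :: "('b \<times> 'b) set \<Rightarrow> ('b \<times> 'b) set \<Rightarrow> ('b \<times> 'b) set" where
  "pf_upd f g = {(x, y) \<in> f. x \<notin> Domain g} \<union> {(x, y) \<in> g. x \<in> Domain f}"

definition pf_pref :: "('b \<times> 'b) set \<Rightarrow> ('b \<times> 'b) set \<Rightarrow> ('b \<times> 'b) set" where
  "pf_pref f g = f \<union> {(x, y) \<in> g. x \<notin> Domain f}"

definition pf_dom :: "('b \<times> 'b) set \<Rightarrow> ('b \<times> 'b) set" where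
  "pf_dom f = Id_on (Domain f)"

definition pf_antidom :: "'b set \<Rightarrow> ('b \<times> 'b) set \<Rightarrow> ('b \<times> 'b) set" where
  "pf_antidom X f = Id_on (X - Domain f)"

definition is_pfun_on :: "'b set \<Rightarrow> ('b \<times> 'b) set \<Rightarrow> bool" where
  "is_pfun_on X f \<longleftrightarrow> f \<subseteq> X \<times> X \<and> single_valued f"

definition pfun_rep :: "opsym set \<Rightarrow> 'a salg \<Rightarrow> 'b set \<Rightarrow> ('a \<Rightarrow> ('b \<times> 'b) set) \<Rightarrow> bool" where
  "pfun_rep \<sigma> A X \<theta> \<longleftrightarrow>
     inj_on \<theta> (carrier A) \<and>
     (\<forall>a\<in>carrier A. is_pfun_on X (\<theta> a)) \<and>
     (ARestr \<in> \<sigma> \<longrightarrow> (\<forall>a\<in>carrier A. \<forall>b\<in>carrier A. \<theta> (ar A a b) = pf_ar (\<theta> a) (\<theta> b))) \<and>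
     (Comp \<in> \<sigma> \<longrightarrow> (\<forall>a\<in>carrier A. \<forall>b\<in>carrier A. \<theta> (cmp A a b) = \<theta> a O \<theta> b)) \<and>
     (Meet \<in> \<sigma> \<longrightarrow> (\<forall>a\<in>carrier A. \<forall>b\<in>carrier A. \<theta> (mt A a b) = \<theta> a \<inter> \<theta> b)) \<and>
     (Upd \<in> \<sigma> \<longrightarrow> (\<forall>a\<in>carrier A. \<forall>b\<in>carrier A. \<theta> (up A a b) = pf_upd (\<theta> a) (\<theta> b))) \<and>
     (Pref \<in> \<sigma> \<longrightarrow> (\<forall>a\<in>carrier A. \<forall>b\<in>carrier A. \<theta> (pu A a b) = pf_pref (\<theta> a) (\<theta> b))) \<and>
     (Dom \<in> \<sigma> \<longrightarrow> (\<forall>a\<in>carrier A. \<theta> (dm A a) = pf_dom (\<theta> a))) \<and>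
     (Antidom \<in> \<sigma> \<longrightarrow> (\<forall>a\<in>carrier A. \<theta> (adm A a) = pf_antidom X (\<theta> a)))"

definition alg_zero :: "'a salg \<Rightarrow> 'a" where
  "alg_zero A = (let a = (SOME a. a \<in> carrier A) in ar A a a)"

definition alg_lhd :: "'a salg \<Rightarrow> 'a \<Rightarrow> 'a \<Rightarrow> 'a" where
  "alg_lhd A a b = ar A (ar A a b) b"

definition alg_le :: "'a salg \<Rightarrow> 'a \<Rightarrow> 'a \<Rightarrow> bool" where
  "alg_le A a b \<longleftrightarrow> alg_lhd A a b = a"

definition is_atom :: "'a salg \<Rightarrow> 'a \<Rightarrow> bool" where
  "is_atom A c \<longleftrightarrow> c \<in> carrier A \<and> c \<noteq> alg_zero A \<and>
     (\<forall>d\<in>carrier A. alg_le A d c \<longrightarrow> d = alg_zero A \<or> d = c)"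

definition is_glb :: "'a salg \<Rightarrow> 'a set \<Rightarrow> 'a \<Rightarrow> bool" where
  "is_glb A S m \<longleftrightarrow> m \<in> carrier A \<and> (\<forall>s\<in>S. alg_le A m s) \<and>
     (\<forall>l\<in>carrier A. (\<forall>s\<in>S. alg_le A l s) \<longrightarrow> alg_le A l m)"

definition meet_complete :: "'a salg \<Rightarrow> ('a \<Rightarrow> ('b \<times> 'b) set) \<Rightarrow> bool" where
  "meet_complete A \<theta> \<longleftrightarrow>
     (\<forall>S m. S \<noteq> {} \<and> S \<subseteq> carrier A \<and> is_glb A S m \<longrightarrow> \<theta> m = (\<Inter>s\<in>S. \<theta> s))"

end

theory Submission
  imports Defs
begin

lemma ar_in:
  assumes "ARestr \<in> \<sigma>" "sigma_algebra \<sigma> A" "a \<in> carrier A" "b \<in> carrier A"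
  shows "ar A a b \<in> carrier A"
proof -
  have "ARestr \<in> \<sigma> \<longrightarrow> (\<forall>a\<in>carrier A. \<forall>b\<in>carrier A. ar A a b \<in> carrier A)"
    using assms(2) unfolding sigma_algebra_def by (rule conjunct1)
  then show ?thesis using assms(1,3,4) by simp
qed

lemma th_ar:
  assumes "ARestr \<in> \<sigma>" "pfun_rep \<sigma> A X \<theta>" "a \<in> carrier A" "b \<in> carrier A"
  shows "\<theta> (ar A a b) = pf_ar (\<theta> a) (\<theta> b)"
proof -
  have "ARestr \<in> \<sigma> \<longrightarrow> (\<forall>a\<in>carrier A. \<forall>b\<in>carrier A. \<theta> (ar A a b) = pf_ar (\<theta> a) (\<theta> b))"
    using assms(2) unfolding pfun_rep_def by (elim conjE)
  then show ?thesis using assms(1,3,4) by simp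
qed

lemma th_sv:
  assumes "pfun_rep \<sigma> A X \<theta>" "a \<in> carrier A"
  shows "single_valued (\<theta> a)"
proof -
  have "\<forall>a\<in>carrier A. is_pfun_on X (\<theta> a)"
    using assms(1) unfolding pfun_rep_def by (elim conjE)
  then show ?thesis using assms(2) unfolding is_pfun_on_def by simp
qed

lemma th_inj:
  assumes "pfun_rep \<sigma> A X \<theta>" "a \<in> carrier A" "b \<in> carrier A" "\<theta> a = \<theta> b"
  shows "a = b"
proof -
  have "inj_on \<theta> (carrier A)" using assms(1) unfolding pfun_rep_def by (rule conjunct1)
  then show ?thesis using assms(4,2,3) by (rule inj_onD)
qed

lemma le_iff:
  assumes "ARestr \<in> \<sigma>" "sigma_algebra \<sigma> A" "pfun_rep \<sigma> A X \<theta>" "a \<in> carrier A" "b \<in> carrier A"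
  shows "alg_le A a b \<longleftrightarrow> \<theta> a \<subseteq> \<theta> b"
proof -
  have c1: "ar A a b \<in> carrier A" using ar_in[OF assms(1,2,4,5)] .
  have c2: "alg_lhd A a b \<in> carrier A" unfolding alg_lhd_def using ar_in[OF assms(1,2) c1 assms(5)] .
  have eq: "\<theta> (alg_lhd A a b) = {(x,y) \<in> \<theta> b. x \<in> Domain (\<theta> a)}"
    unfolding alg_lhd_def using th_ar[OF assms(1,3) c1 assms(5)] th_ar[OF assms(1,3) assms(4,5)]
    by (auto simp: pf_ar_def)
  have sv: "single_valued (\<theta> b)" using th_sv[OF assms(3,5)] .
  have "alg_le A a b \<longleftrightarrow> \<theta> (alg_lhd A a b) = \<theta> a"
    unfolding alg_le_def using th_inj[OF assms(3) c2 assms(4)] by (metis)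
  also have "\<dots> \<longleftrightarrow> \<theta> a \<subseteq> \<theta> b"
  proof
    assume h: "\<theta> (alg_lhd A a b) = \<theta> a"
    have "\<theta> a = {(x,y) \<in> \<theta> b. x \<in> Domain (\<theta> a)}" using eq unfolding h .
    moreover have "{(x,y) \<in> \<theta> b. x \<in> Domain (\<theta> a)} \<subseteq> \<theta> b" by auto
    ultimately show "\<theta> a \<subseteq> \<theta> b" by (rule ord_eq_le_trans)
  next
    assume s: "\<theta> a \<subseteq> \<theta> b"
    show "\<theta> (alg_lhd A a b) = \<theta> a"
    proof
      show "\<theta> (alg_lhd A a b) \<subseteq> \<theta> a"
      proof
        fix p assume "p \<in> \<theta> (alg_lhd A a b)"
        then have "p \<in> {(x,y) \<in> \<theta> b. x \<in> Domain (\<theta> a)}" unfolding eq .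
        then obtain x y where p0: "p = (x,y)" "(x,y) \<in> \<theta> b" "x \<in> Domain (\<theta> a)" by blast
        then obtain z where "(x,z) \<in> \<theta> a" by blast
        with p0 have p: "p = (x,y)" "(x,y) \<in> \<theta> b" "(x,z) \<in> \<theta> a" by auto
        then have "(x,z) \<in> \<theta> b" using s by auto
        then have "y = z" using sv p(2) by (meson single_valuedD)
        then show "p \<in> \<theta> a" using p by simp
      qed
    next
      show "\<theta> a \<subseteq> \<theta> (alg_lhd A a b)" using s eq by auto
    qed
  qed
  finally show ?thesis .
qed

lemma zero_props:
  assumes "ARestr \<in> \<sigma>" "sigma_algebra \<sigma> A" "pfun_rep \<sigma> A X \<theta>" "a \<in> carrier A"
  shows "alg_zero A \<in> carrier A" "\<theta> (alg_zero A) = {}"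
proof -
  let ?s = "SOME a. a \<in> carrier A"
  have s: "?s \<in> carrier A" using assms(4) by (rule someI)
  show "alg_zero A \<in> carrier A" unfolding alg_zero_def Let_def using ar_in[OF assms(1,2) s s] .
  show "\<theta> (alg_zero A) = {}" unfolding alg_zero_def Let_def
    using th_ar[OF assms(1,3) s s] by (auto simp: pf_ar_def)
qed

theorem corollary4p5:
  fixes \<sigma> :: "opsym set" and A :: "'a salg" and X :: "'b set" and \<theta> :: "'a \<Rightarrow> ('b \<times> 'b) set"
  assumes "ARestr \<in> \<sigma>"
    and "sigma_algebra \<sigma> A"
    and "pfun_rep \<sigma> A X \<theta>"
    and "meet_complete A \<theta>"
  shows "(\<forall>a\<in>carrier A. \<forall>b\<in>carrier A. \<not> alg_le A a b \<longrightarrow>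
            (\<exists>c. is_atom A c \<and> alg_le A c a \<and> \<not> alg_le A c b))
       \<and> (\<forall>a\<in>carrier A. a \<noteq> alg_zero A \<longrightarrow> (\<exists>c. is_atom A c \<and> alg_le A c a))"
proof -
  note le = le_iff[OF assms(1,2,3)]
  note arI = ar_in[OF assms(1,2)]
  note thar = th_ar[OF assms(1,3)]
  have part1: "\<exists>c. is_atom A c \<and> alg_le A c a \<and> \<not> alg_le A c b"
    if a: "a \<in> carrier A" and b: "b \<in> carrier A" and nle: "\<not> alg_le A a b" for a b
  proof -
    note z = zero_props[OF assms(1,2,3) a]
    obtain x y where xy: "(x,y) \<in> \<theta> a" "(x,y) \<notin> \<theta> b" using nle le[OF a b] by auto
    define S where "S = {c \<in> carrier A. alg_le A c a \<and> (x,y) \<in> \<theta> c}"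
    have aS: "a \<in> S" unfolding S_def using a xy le[OF a a] by auto
    have "\<exists>l\<in>carrier A. (\<forall>s\<in>S. alg_le A l s) \<and> (x,y) \<in> \<theta> l"
    proof (rule ccontr)
      assume nex: "\<not> ?thesis"
      have "is_glb A S (alg_zero A)"
        unfolding is_glb_def
      proof (intro conjI ballI impI)
        show "alg_zero A \<in> carrier A" using z by simp
      next
        fix s assume "s \<in> S" then show "alg_le A (alg_zero A) s"
          using le[OF z(1)] z(2) unfolding S_def by auto
      next
        fix l assume l: "l \<in> carrier A" and lb: "\<forall>s\<in>S. alg_le A l s"
        have nxy: "(x,y) \<notin> \<theta> l" using nex l lb by blast
        have la: "\<theta> l \<subseteq> \<theta> a" using lb aS le[OF l a] by blast
        have "x \<notin> Domain (\<theta> l)"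
        proof
          assume "x \<in> Domain (\<theta> l)"
          then obtain z' where "(x,z') \<in> \<theta> l" by auto
          moreover then have "z' = y" using la xy th_sv[OF assms(3) a] single_valuedD by (metis subsetD)
          ultimately show False using nxy by simp
        qed
        have r: "ar A l a \<in> carrier A" using arI[OF l a] .
        have tr: "\<theta> (ar A l a) = pf_ar (\<theta> l) (\<theta> a)" using thar[OF l a] .
        have "ar A l a \<in> S" unfolding S_def using r tr le[OF r a] xy \<open>x \<notin> Domain (\<theta> l)\<close>
          by (auto simp: pf_ar_def)
        then have "\<theta> l \<subseteq> pf_ar (\<theta> l) (\<theta> a)" using lb le[OF l r] tr by auto
        then have "\<theta> l = {}" by (auto simp: pf_ar_def)
        then show "alg_le A l (alg_zero A)" using le[OF l z(1)] z(2) by simp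
      qed
      moreover have "S \<subseteq> carrier A" unfolding S_def by auto
      ultimately have "\<theta> (alg_zero A) = (\<Inter>s\<in>S. \<theta> s)"
        using assms(4) aS unfolding meet_complete_def by blast
      then show False using z(2) aS unfolding S_def by auto
    qed
    then obtain l where l: "l \<in> carrier A" and lb: "\<forall>s\<in>S. alg_le A l s" and lxy: "(x,y) \<in> \<theta> l" by blast
    have la: "alg_le A l a" using lb aS by blast
    have lS: "l \<in> S" unfolding S_def using l la lxy by auto
    have atom: "is_atom A l"
      unfolding is_atom_def
    proof (intro conjI ballI impI)
      show "l \<in> carrier A" by fact
      show "l \<noteq> alg_zero A" using lxy z(2) by auto
    next
      fix d assume d: "d \<in> carrier A" and dl: "alg_le A d l"
      have dsub: "\<theta> d \<subseteq> \<theta> l" using le[OF d l] dl by simp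
      show "d = alg_zero A \<or> d = l"
      proof (cases "x \<in> Domain (\<theta> d)")
        case True
        then obtain z' where "(x,z') \<in> \<theta> d" by auto
        moreover then have "z' = y" using dsub lxy th_sv[OF assms(3) l] single_valuedD by (metis subsetD)
        ultimately have "(x,y) \<in> \<theta> d" by simp
        moreover have "alg_le A d a" using dsub la le[OF d a] le[OF l a] by auto
        ultimately have "d \<in> S" unfolding S_def using d by auto
        then have "\<theta> l \<subseteq> \<theta> d" using lb le[OF l d] by blast
        then have "d = l" using dsub th_inj[OF assms(3) d l] by auto
        then show ?thesis by simp
      next
        case False
        have r: "ar A d l \<in> carrier A" using arI[OF d l] .
        have tr: "\<theta> (ar A d l) = pf_ar (\<theta> d) (\<theta> l)" using thar[OF d l] .
        have "ar A d l \<in> S" unfolding S_def using r tr le[OF r a] le[OF l a] la lxy False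
          by (auto simp: pf_ar_def)
        then have "\<theta> l \<subseteq> pf_ar (\<theta> d) (\<theta> l)" using lb le[OF l r] tr by auto
        then have "\<theta> d = {}" using dsub by (auto simp: pf_ar_def)
        then have "d = alg_zero A" using th_inj[OF assms(3) d z(1)] z(2) by simp
        then show ?thesis by simp
      qed
    qed
    have "\<not> alg_le A l b" using le[OF l b] lxy xy by auto
    then show ?thesis using atom la by blast
  qed
  show ?thesis
  proof (intro conjI ballI impI)
    fix a b assume "a \<in> carrier A" "b \<in> carrier A" "\<not> alg_le A a b"
    then show "\<exists>c. is_atom A c \<and> alg_le A c a \<and> \<not> alg_le A c b" using part1 by blast
  next
    fix a assume a: "a \<in> carrier A" and nz: "a \<noteq> alg_zero A"
    note z = zero_props[OF assms(1,2,3) a]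
    have "\<not> alg_le A a (alg_zero A)"
      using le[OF a z(1)] z(2) th_inj[OF assms(3) a z(1)] nz by auto
    then show "\<exists>c. is_atom A c \<and> alg_le A c a" using part1[OF a z(1)] by blast
  qed
qed

end
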